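(* Let $\mathbb{F}$ be a finite field, $K=\mathbb{F}(\!(\pi)\!)$ and $\mathcal{O}=\mathbb{F}[\![\pi]\!]$. The action of $\mathrm{AGL}_1(\mathcal{O})$ on $\mathcal{T}_\mathcal{O}$ is coarsely diagonal.
   Context: $\mathrm{AGL}_1(\mathcal{O})=\mathcal{O}^\times\ltimes\mathcal{O}$ consists of pairs $(\alpha,\beta)$ acting on $K$ by $\gamma\mapsto\alpha\gamma+\beta$. With $\mathfrak{m}=\pi\mathcal{O}$, the tree $\mathcal{T}_\mathcal{O}$ has vertices $\gamma\bmod\mathfrak{m}^e$ ($\gamma\in\mathcal{O}$, $e\ge0$), with $\gamma\bmod\mathfrak{m}^e$ adjacent to $\delta\bmod\mathfrak{m}^f$ iff $|e-f|=1$ and $\gamma\equiv\delta\bmod\mathfrak{m}^{\min\{e,f\}}$; $\mathrm{AGL}_1(\mathcal{O})$ acts (faithfully) by $(\alpha,\beta).(\gamma\bmod\mathfrak{m}^e)=\alpha\gamma+\beta\bmod\mathfrak{m}^e$. Ordering $\mathbb{F}$ identifies $\mathcal{T}_\mathcal{O}$ with the rooted $|\mathbb{F}|$-ary tree. For a tree automorphism $f$ with wreath recursion $f=\rho(f)(f_1,\dots,f_m)$ (where $f(iw)=\rho(f)(i)f_i(w)$), its states form the smallest set containing $f$ and closed under $f\mapsto f_i$. A group $H$ of tree automorphisms is coarsely diagonal if for every $h\in H$ and every state $h'$ of $h$, $(h')^{-1}h$ has finite order; an action is coarsely diagonal if it is faithful and its image is. *)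

theory Defs
  imports "HOL-Computational_Algebra.Formal_Power_Series"
begin

(* The rooted |F|-ary tree: vertices are finite words over the alphabet 'a (= F).
   The vertex gamma mod m^e corresponds to the word [gamma_0, ..., gamma_(e-1)]
   of the first e coefficients of gamma. *)

definition tree_aut :: "('a list \<Rightarrow> 'a list) \<Rightarrow> bool" where
  "tree_aut f \<longleftrightarrow> bij f \<and> (\<forall>w. length (f w) = length w)
      \<and> (\<forall>v w. take (length v) (f (v @ w)) = f v)"

(* states: smallest set containing f and closed under f |-> f_i,
   where f (i # w) = rho(f)(i) # f_i w *)
inductive_set states :: "('a list \<Rightarrow> 'a list) \<Rightarrow> ('a list \<Rightarrow> 'a list) set"
  for f where
  self: "f \<in> states f"
| sect: "g \<in> states f \<Longrightarrow> (\<lambda>w. tl (g (i # w))) \<in> states f"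

definition finite_order :: "('a \<Rightarrow> 'a) \<Rightarrow> bool" where
  "finite_order g \<longleftrightarrow> (\<exists>n>0. g ^^ n = id)"

definition coarsely_diagonal :: "('a list \<Rightarrow> 'a list) set \<Rightarrow> bool" where
  "coarsely_diagonal H \<longleftrightarrow> (\<forall>h\<in>H. tree_aut h)
      \<and> (\<forall>h\<in>H. \<forall>h'\<in>states h. finite_order (inv h' \<circ> h))"

definition coarsely_diagonal_action ::
  "'g set \<Rightarrow> ('g \<Rightarrow> 'a list \<Rightarrow> 'a list) \<Rightarrow> bool" where
  "coarsely_diagonal_action G act \<longleftrightarrow> inj_on act G \<and> coarsely_diagonal (act ` G)"

definition AGL1 :: "('a::comm_ring_1 fps \<times> 'a fps) set" where
  "AGL1 = {(\<alpha>, \<beta>). \<alpha> dvd 1}"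

definition fps_of_word :: "'a::zero list \<Rightarrow> 'a fps" where
  "fps_of_word w = Abs_fps (\<lambda>n. if n < length w then w ! n else 0)"

(* (alpha,beta).(gamma mod m^e) = alpha*gamma + beta mod m^e *)
definition agl_act :: "('a::comm_ring_1 fps \<times> 'a fps) \<Rightarrow> 'a list \<Rightarrow> 'a list" where
  "agl_act g w = map (\<lambda>n. fps_nth (fst g * fps_of_word w + snd g) n) [0..<length w]"

end

theory Submission
  imports Defs
begin

lemma fow_nth: "n < length w \<Longrightarrow> fps_nth (fps_of_word w) n = w ! n"
  by (simp add: fps_of_word_def)

lemma fow_append: "n < length v \<Longrightarrow> fps_nth (fps_of_word (v @ w)) n = fps_nth (fps_of_word v) n"
  by (simp add: fps_of_word_def nth_append)

lemma fow_cons: "fps_of_word (i # w) = fps_const (i::'a::comm_ring_1) + fps_X * fps_of_word w"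
proof (rule fps_ext)
  fix n show "fps_nth (fps_of_word (i # w)) n = fps_nth (fps_const i + fps_X * fps_of_word w) n"
    by (cases n) (auto simp: fps_of_word_def)
qed

lemma fow_zero: "fps_of_word (replicate k 0) = 0"
  by (rule fps_ext) (simp add: fps_of_word_def)

lemma fow_one: "fps_of_word (1 # replicate k 0) = (1::'a::comm_ring_1 fps)"
  by (rule fps_ext) (auto simp: fps_of_word_def nth_Cons split: nat.splits)

lemma act_len[simp]: "length (agl_act g w) = length w"
  by (simp add: agl_act_def)

lemma lin_agree:
  fixes X Y a b :: "'a::comm_ring_1 fps"
  assumes "\<forall>m<k. fps_nth X m = fps_nth Y m" and "n < k"
  shows "fps_nth (a * X + b) n = fps_nth (a * Y + b) n"
proof -
  have "(\<Sum>i=0..n. fps_nth a i * fps_nth X (n - i)) = (\<Sum>i=0..n. fps_nth a i * fps_nth Y (n - i))"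
    using assms by (intro sum.cong) auto
  thus ?thesis by (simp add: fps_mult_nth)
qed

lemma fow_act: "n < length w \<Longrightarrow> fps_nth (fps_of_word (agl_act (a,b) w)) n = fps_nth (a * fps_of_word w + b) n"
  by (simp add: fow_nth agl_act_def)

lemma act_comp:
  fixes a b a' b' :: "'a::comm_ring_1 fps"
  shows "agl_act (a,b) (agl_act (a',b') w) = agl_act (a*a', a*b'+b) w"
proof -
  have "\<And>n. n < length w \<Longrightarrow> fps_nth (a * fps_of_word (agl_act (a',b') w) + b) n
        = fps_nth (a * (a' * fps_of_word w + b') + b) n"
    by (rule lin_agree[where k="length w"]) (auto simp: fow_act)
  moreover have "a * (a' * fps_of_word w + b') + b = a*a' * fps_of_word w + (a*b'+b)"
    by (simp add: algebra_simps)
  ultimately show ?thesis by (simp add: agl_act_def)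
qed

lemma act_id: "agl_act (1,0) w = w"
  by (rule nth_equalityI) (simp_all add: agl_act_def fow_nth)

lemma act_id': "agl_act (1,0) = id"
  using act_id by (intro ext) simp

lemma act_tree_aut:
  fixes a b :: "'a::comm_ring_1 fps"
  assumes "a * a' = 1"
  shows "tree_aut (agl_act (a,b))"
proof -
  have e1: "a * - (a' * b) + b = 0" "a' * b + - (a' * b) = 0" "a' * a = 1"
    using assms by (simp_all add: mult.assoc[symmetric] mult.commute)
  have c1: "agl_act (a,b) \<circ> agl_act (a', -(a'*b)) = id"
    by (rule ext) (simp only: comp_apply act_comp e1 assms act_id id_apply)
  have c2: "agl_act (a', -(a'*b)) \<circ> agl_act (a,b) = id"
    by (rule ext) (simp only: comp_apply act_comp e1 assms act_id id_apply)
  have "bij (agl_act (a,b))" using c1 c2 by (metis o_bij)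
  moreover have "take (length v) (agl_act (a,b) (v @ w)) = agl_act (a,b) v" for v w
  proof -
    have "\<And>n. n < length v \<Longrightarrow> fps_nth (a * fps_of_word (v@w) + b) n = fps_nth (a * fps_of_word v + b) n"
      by (rule lin_agree[where k="length v"]) (auto simp: fow_append)
    thus ?thesis by (simp add: agl_act_def take_map min_def)
  qed
  ultimately show ?thesis by (simp add: tree_aut_def)
qed

lemma act_inv:
  fixes a b :: "'a::comm_ring_1 fps"
  assumes "a * a' = 1"
  shows "inv (agl_act (a,b)) = agl_act (a', -(a'*b))"
proof -
  have e1: "a * - (a' * b) + b = 0" "a' * b + - (a' * b) = 0" "a' * a = 1"
    using assms by (simp_all add: mult.assoc[symmetric] mult.commute)
  have c1: "agl_act (a,b) \<circ> agl_act (a', -(a'*b)) = id"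
    by (rule ext) (simp only: comp_apply act_comp e1 assms act_id id_apply)
  have c2: "agl_act (a', -(a'*b)) \<circ> agl_act (a,b) = id"
    by (rule ext) (simp only: comp_apply act_comp e1 assms act_id id_apply)
  show ?thesis using c1 c2 by (metis inv_unique_comp)
qed

lemma states_form:
  fixes a b :: "'a::comm_ring_1 fps"
  assumes "g \<in> states (agl_act (a,b))"
  shows "\<exists>b'. g = agl_act (a,b')"
  using assms
proof induction
  case self then show ?case by blast
next
  case (sect g i)
  then obtain b' where g: "g = agl_act (a,b')" by blast
  have "(\<lambda>w. tl (g (i # w))) = agl_act (a, fps_shift 1 (a * fps_const i + b'))"
  proof
    fix w
    have e: "a * fps_of_word (i # w) + b' = (a * fps_const i + b') + fps_X * (a * fps_of_word w)"
      by (simp add: fow_cons algebra_simps)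
    have "tl (g (i # w)) = map (\<lambda>n. fps_nth (a * fps_of_word (i # w) + b') (Suc n)) [0..<length w]"
      by (simp add: g agl_act_def map_upt_Suc del: upt_Suc)
    also have "\<dots> = agl_act (a, fps_shift 1 (a * fps_const i + b')) w"
      unfolding e by (simp add: agl_act_def)
    finally show "tl (g (i # w)) = agl_act (a, fps_shift 1 (a * fps_const i + b')) w" .
  qed
  then show ?case by blast
qed

lemma transl_pow:
  fixes d :: "'a::comm_ring_1 fps"
  shows "agl_act (1, d) ^^ n = agl_act (1, of_nat n * d)"
proof (induction n)
  case 0 then show ?case by (simp add: act_id')
next
  case (Suc n)
  have "agl_act (1, d) ^^ Suc n = agl_act (1,d) \<circ> agl_act (1, of_nat n * d)"
    using Suc by simp
  also have "\<dots> = agl_act (1, of_nat (Suc n) * d)"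
    by (auto simp: act_comp algebra_simps)
  finally show ?case .
qed

lemma transl_fin:
  fixes d :: "'a::{field,finite} fps"
  shows "finite_order (agl_act (1, d))"
proof -
  have "CHAR('a) > 0" by (rule finite_imp_CHAR_pos) simp
  then obtain n where n: "n > 0" "of_nat n = (0::'a)" using CHAR_pos_iff by blast
  have "(of_nat n :: 'a fps) = fps_const (of_nat n)" by (simp add: fps_of_nat)
  with n have "(of_nat n :: 'a fps) = 0" by simp
  then have "agl_act (1, d) ^^ n = id" by (simp add: transl_pow act_id')
  with n show ?thesis unfolding finite_order_def by blast
qed

theorem lemma6p7:
  shows "coarsely_diagonal_action (AGL1 :: ('a::{field,finite} fps \<times> 'a fps) set) agl_act"
proof -
  have inj: "inj_on agl_act (AGL1 :: ('a fps \<times> 'a fps) set)"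
  proof (rule inj_onI)
    fix g h :: "'a fps \<times> 'a fps"
    assume "agl_act g = agl_act h"
    obtain a b where g: "g = (a,b)" by fastforce
    obtain a' b' where h: "h = (a',b')" by fastforce
    have eq: "agl_act (a,b) w = agl_act (a',b') w" for w
      using \<open>agl_act g = agl_act h\<close> g h by simp
    have bb: "fps_nth b n = fps_nth b' n" for n
    proof -
      have "agl_act (a,b) (replicate (Suc n) 0) ! n = agl_act (a',b') (replicate (Suc n) 0) ! n"
        using eq by simp
      thus ?thesis by (simp add: agl_act_def fow_zero del: upt_Suc replicate_Suc)
    qed
    have aa: "fps_nth a n = fps_nth a' n" for n
    proof -
      have "agl_act (a,b) (1 # replicate n 0) ! n = agl_act (a',b') (1 # replicate n 0) ! n"
        using eq by simp
      hence "fps_nth (a + b) n = fps_nth (a' + b') n"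
        by (simp add: agl_act_def fow_one del: upt_Suc replicate_Suc)
      thus ?thesis using bb[of n] by simp
    qed
    show "g = h" using aa bb g h by (simp add: fps_ext)
  qed
  have ta: "\<forall>h\<in>agl_act ` (AGL1 :: ('a fps \<times> 'a fps) set). tree_aut h"
  proof
    fix h assume "h \<in> agl_act ` (AGL1 :: ('a fps \<times> 'a fps) set)"
    then obtain g where g: "g \<in> (AGL1 :: ('a fps \<times> 'a fps) set)" "h = agl_act g" by blast
    obtain a b :: "'a fps" where ab: "g = (a,b)" by fastforce
    have h: "h = agl_act (a,b)" using g ab by simp
    have "a dvd 1" using g(1) ab unfolding AGL1_def by blast
    from \<open>a dvd 1\<close> obtain a' where "1 = a * a'" by (rule dvdE)
    then show "tree_aut h" using h act_tree_aut by metis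
  qed
  have fo: "\<forall>h\<in>agl_act ` (AGL1 :: ('a fps \<times> 'a fps) set). \<forall>h'\<in>states h. finite_order (inv h' \<circ> h)"
  proof (intro ballI)
    fix h h' assume "h \<in> agl_act ` (AGL1 :: ('a fps \<times> 'a fps) set)" "h' \<in> states h"
    then obtain g where g: "g \<in> (AGL1 :: ('a fps \<times> 'a fps) set)" "h = agl_act g" by blast
    obtain a b :: "'a fps" where ab: "g = (a,b)" by fastforce
    have h: "h = agl_act (a,b)" using g ab by simp
    have "a dvd 1" using g(1) ab unfolding AGL1_def by blast
    from \<open>a dvd 1\<close> obtain k where k: "1 = a * k" by (rule dvdE)
    define a' where "a' = k"
    have a': "a * a' = 1" using k a'_def by simp
    obtain b' where h': "h' = agl_act (a,b')"
      using states_form \<open>h' \<in> states h\<close> h by blast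
    have "inv h' \<circ> h = agl_act (a' * a, a' * b + - (a' * b'))"
      using h h' a' by (auto simp: act_inv act_comp)
    also have "\<dots> = agl_act (1, a' * b - a' * b')"
      using a' by (simp add: mult.commute)
    finally show "finite_order (inv h' \<circ> h)" by (simp add: transl_fin)
  qed
  show ?thesis unfolding coarsely_diagonal_action_def coarsely_diagonal_def
    using inj ta fo by blast
qed

end
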